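(* For every integers $d \geq 2$ and $s,t \geq 1$, we have $$\tfrac{s}{s+t}\mathsf U_{d,s}+\tfrac{t}{s+t}\mathsf U_{d,t}\subseteq \mathsf U_{d,s+t},$$ i.e. for all $B\in\mathsf U_{d,s}$, $C\in\mathsf U_{d,t}$, the matrix $\tfrac{s}{s+t}B+\tfrac{t}{s+t}C$ belongs to $\mathsf U_{d,s+t}$.
   Context: For integers $d\ge 2$, $s\ge 1$, a matrix $U\in\mathcal U(ds)$ (unitary $ds\times ds$ complex matrices) is viewed as a $d\times d$ block matrix with blocks $U_{ij}\in M_s(\mathbb C)$. Define $\phi_{d,s}(U)=\big(\tfrac1s\|U_{ij}\|_F^2\big)_{i,j=1}^d$, where $\|X\|_F=\operatorname{Tr}(XX^* )^{1/2}$, and $\mathsf U_{d,s}:=\phi_{d,s}(\mathcal U(ds))$. *)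

theory Defs
  imports "HOL-Analysis.Analysis"
begin

text \<open>Square complex matrices of size n are represented as functions
  nat => nat => complex, with indices 0..n-1 meaningful (entries outside are irrelevant).\<close>

definition unitary_mat :: "nat \<Rightarrow> (nat \<Rightarrow> nat \<Rightarrow> complex) \<Rightarrow> bool" where
  "unitary_mat n U \<longleftrightarrow>
     (\<forall>i<n. \<forall>j<n. (\<Sum>k<n. U i k * cnj (U j k)) = (if i = j then 1 else 0)) \<and>
     (\<forall>i<n. \<forall>j<n. (\<Sum>k<n. cnj (U k i) * U k j) = (if i = j then 1 else 0))"

definition phi :: "nat \<Rightarrow> nat \<Rightarrow> (nat \<Rightarrow> nat \<Rightarrow> complex) \<Rightarrow> (nat \<Rightarrow> nat \<Rightarrow> real)" where
  "phi d s U = (\<lambda>i j. if i < d \<and> j < d then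
      (1 / real s) * (\<Sum>a<s. \<Sum>b<s. (cmod (U (i * s + a) (j * s + b)))\<^sup>2) else 0)"

definition Uset :: "nat \<Rightarrow> nat \<Rightarrow> (nat \<Rightarrow> nat \<Rightarrow> real) set" where
  "Uset d s = phi d s ` {U. unitary_mat (d * s) U}"

end

theory Submission
  imports Defs
begin

lemma sum_add_split: "(\<Sum>a<s+t. f a) = (\<Sum>a<s. f a) + (\<Sum>a<t. f (s+a :: nat)) "
  by (induction t) (auto simp: add.assoc)

lemma sum_block: "(\<Sum>k<d*m. h k) = (\<Sum>j<d. \<Sum>b<m. h (j*m+b :: nat))"
proof (induction d)
  case 0 then show ?case by simp
next
  case (Suc d)
  have "(\<Sum>k<Suc d*m. h k) = (\<Sum>k<d*m + m. h k)" by (simp add: add.commute)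
  also have "\<dots> = (\<Sum>k<d*m. h k) + (\<Sum>b<m. h (d*m+b))" by (rule sum_add_split)
  finally show ?case using Suc by simp
qed

lemma dm_helper:
  assumes "r < (n::nat)"
  shows "(a * n + r) div n = a" "(a * n + r) mod n = r"
proof -
  have n: "n \<noteq> 0" using assms by simp
  show "(a * n + r) div n = a" using div_mult_self1[OF n, of r a] assms by (simp add: add.commute)
  show "(a * n + r) mod n = r" using mod_mult_self1[of r a n] assms by (simp add: add.commute)
qed

lemma sum_split2:
  fixes g :: "nat \<Rightarrow> 'a::comm_monoid_add"
  assumes "0 < s"  "0 < t"
  shows "(\<Sum>k<d* (s+t). g k) = (\<Sum>k<d* s. g (k div s * (s+t) + k mod s))
     + (\<Sum>k<d*t. g (k div t * (s+t) + s + k mod t))"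
proof -
  have "(\<Sum>k<d* (s+t). g k) = (\<Sum>j<d. \<Sum>b<s+t. g (j* (s+t)+b))" by (rule sum_block[of g d "s+t"])
  also have "\<dots> = (\<Sum>j<d. (\<Sum>b<s. g (j* (s+t)+b)) + (\<Sum>b<t. g (j* (s+t)+(s+b))))"
    by (rule sum.cong[OF refl], rule sum_add_split)
  also have "\<dots> = (\<Sum>j<d. \<Sum>b<s. g (j* (s+t)+b)) + (\<Sum>j<d. \<Sum>b<t. g (j* (s+t)+(s+b)))"
    by (simp add: sum.distrib)
  also have "(\<Sum>j<d. \<Sum>b<s. g (j* (s+t)+b)) = (\<Sum>k<d* s. g (k div s * (s+t) + k mod s))"
  proof -
    have "(\<Sum>k<d* s. g (k div s * (s+t) + k mod s)) = (\<Sum>j<d. \<Sum>b<s. g ((j * s + b) div s * (s+t) + (j * s + b) mod s))"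
      by (rule sum_block[of "\<lambda>k. g (k div s * (s+t) + k mod s)" d s])
    also have "\<dots> = (\<Sum>j<d. \<Sum>b<s. g (j* (s+t)+b))"
    proof (intro sum.cong refl)
      fix j b assume "b \<in> {..<s}"
      then have "(j * s + b) div s = j" "(j * s + b) mod s = b" using dm_helper[of b s j] by auto
      then show "g ((j * s + b) div s * (s+t) + (j * s + b) mod s) = g (j* (s+t)+b)"
        by simp
    qed
    finally show ?thesis by (rule sym)
  qed
  also have "(\<Sum>j<d. \<Sum>b<t. g (j* (s+t)+(s+b))) = (\<Sum>k<d*t. g (k div t * (s+t) + s + k mod t))"
  proof -
    have "(\<Sum>k<d*t. g (k div t * (s+t) + s + k mod t)) = (\<Sum>j<d. \<Sum>b<t. g ((j * t + b) div t * (s+t) + s + (j * t + b) mod t))"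
      by (rule sum_block[of "\<lambda>k. g (k div t * (s+t) + s + k mod t)" d t])
    also have "\<dots> = (\<Sum>j<d. \<Sum>b<t. g (j* (s+t)+(s+b)))"
    proof (intro sum.cong refl)
      fix j b assume "b \<in> {..<t}"
      then have "(j * t + b) div t = j" "(j * t + b) mod t = b" using dm_helper[of b t j] by auto
      then show "g ((j * t + b) div t * (s+t) + s + (j * t + b) mod t) = g (j* (s+t)+(s+b))"
        by (simp add: add.assoc)
    qed
    finally show ?thesis by (rule sym)
  qed
  finally show ?thesis .
qed

definition lft :: "nat \<Rightarrow> nat \<Rightarrow> nat \<Rightarrow> bool" where
  "lft s t p \<longleftrightarrow> p mod (s+t) < s"
definition uix :: "nat \<Rightarrow> nat \<Rightarrow> nat \<Rightarrow> nat" where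
  "uix s t p = p div (s+t) * s + p mod (s+t)"
definition vix :: "nat \<Rightarrow> nat \<Rightarrow> nat \<Rightarrow> nat" where
  "vix s t p = p div (s+t) * t + (p mod (s+t) - s)"
definition Wm :: "nat \<Rightarrow> nat \<Rightarrow> (nat \<Rightarrow> nat \<Rightarrow> complex) \<Rightarrow> (nat \<Rightarrow> nat \<Rightarrow> complex) \<Rightarrow> nat \<Rightarrow> nat \<Rightarrow> complex" where
  "Wm s t U V p q = (if lft s t p \<and> lft s t q then U (uix s t p) (uix s t q)
     else if \<not> lft s t p \<and> \<not> lft s t q then V (vix s t p) (vix s t q) else 0)"

lemma enc1:
  assumes "0 < s" "0 < t"
  shows "lft s t (k div s * (s+t) + k mod s)" "uix s t (k div s * (s+t) + k mod s) = k"
proof -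
  have m: "k mod s < s" using assms by simp
  have m2: "k mod s < s+t" using m by simp
  have a: "(k div s * (s+t) + k mod s) mod (s+t) = k mod s" by (rule dm_helper(2)[OF m2])
  have b: "(k div s * (s+t) + k mod s) div (s+t) = k div s" by (rule dm_helper(1)[OF m2])
  show "lft s t (k div s * (s+t) + k mod s)" using a m by (simp add: lft_def)
  show "uix s t (k div s * (s+t) + k mod s) = k" unfolding uix_def a b by simp
qed

lemma enc2:
  assumes "0 < s" "0 < t"
  shows "\<not> lft s t (k div t * (s+t) + s + k mod t)" "vix s t (k div t * (s+t) + s + k mod t) = k"
proof -
  have m: "s + k mod t < s + t" using assms by simp
  have e: "k div t * (s+t) + s + k mod t = k div t * (s+t) + (s + k mod t)" by simp
  have a: "(k div t * (s+t) + s + k mod t) mod (s+t) = s + k mod t" unfolding e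
    by (rule dm_helper(2)[OF m])
  have b: "(k div t * (s+t) + s + k mod t) div (s+t) = k div t" unfolding e
    by (rule dm_helper(1)[OF m])
  show "\<not> lft s t (k div t * (s+t) + s + k mod t)" using a by (simp add: lft_def)
  show "vix s t (k div t * (s+t) + s + k mod t) = k" unfolding vix_def a b by simp
qed

lemma uix_bound:
  assumes "0 < s" "0 < t" "p < d* (s+t)" "lft s t p"
  shows "uix s t p < d* s"
proof -
  have "p div (s+t) < d" using assms by (simp add: less_mult_imp_div_less mult.commute)
  then have "p div (s+t) + 1 \<le> d" by simp
  then have "(p div (s+t) + 1) * s \<le> d * s" by (rule mult_right_mono) simp
  moreover have "(p div (s+t) + 1) * s = p div (s+t) * s + s" by (simp add: distrib_right)
  moreover have "p mod (s+t) < s" using assms(4) unfolding lft_def .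
  ultimately show ?thesis unfolding uix_def by linarith
qed

lemma vix_bound:
  assumes "0 < s" "0 < t" "p < d* (s+t)" "\<not> lft s t p"
  shows "vix s t p < d*t"
proof -
  have "p div (s+t) < d" using assms by (simp add: less_mult_imp_div_less mult.commute)
  then have "p div (s+t) + 1 \<le> d" by simp
  then have "(p div (s+t) + 1) * t \<le> d * t" by (rule mult_right_mono) simp
  moreover have "p mod (s+t) - s < t"
  proof -
    have "p mod (s+t) < s + t" using assms(1) by simp
    then show ?thesis using assms(2) by linarith
  qed
  moreover have "(p div (s+t) + 1) * t = p div (s+t) * t + t" by (simp add: distrib_right)
  ultimately show ?thesis unfolding vix_def by linarith
qed

lemma uix_inj:
  assumes "0 < s" "0 < t" "lft s t p" "lft s t q" "uix s t p = uix s t q"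
  shows "p = q"
proof -
  have lp: "p mod (s+t) < s" and lq: "q mod (s+t) < s" using assms(3,4) unfolding lft_def by auto
  have "uix s t p div s = p div (s+t)" "uix s t p mod s = p mod (s+t)"
       "uix s t q div s = q div (s+t)" "uix s t q mod s = q mod (s+t)"
    unfolding uix_def using dm_helper[OF lp] dm_helper[OF lq] by auto
  then have e: "p div (s+t) = q div (s+t)" "p mod (s+t) = q mod (s+t)" using assms(5) by metis+
  have "p = p div (s+t) * (s+t) + p mod (s+t)" by (rule div_mult_mod_eq[symmetric])
  also have "\<dots> = q div (s+t) * (s+t) + q mod (s+t)" unfolding e ..
  also have "\<dots> = q" by (rule div_mult_mod_eq)
  finally show ?thesis .
qed

lemma vix_inj:
  assumes "0 < s" "0 < t" "\<not> lft s t p" "\<not> lft s t q" "vix s t p = vix s t q"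
  shows "p = q"
proof -
  have "p mod (s+t) < s + t" "q mod (s+t) < s + t" using assms(1) by simp_all
  then have mp: "p mod (s+t) - s < t" "q mod (s+t) - s < t" using assms(2) by linarith+
  have "vix s t p div t = p div (s+t)" "vix s t p mod t = p mod (s+t) - s"
       "vix s t q div t = q div (s+t)" "vix s t q mod t = q mod (s+t) - s"
    unfolding vix_def using dm_helper[OF mp(1)] dm_helper[OF mp(2)] by auto
  then have e1: "p div (s+t) = q div (s+t)" and e2: "p mod (s+t) - s = q mod (s+t) - s"
    using assms(5) by metis+
  have e3: "p mod (s+t) = q mod (s+t)" using e2 assms(3,4) unfolding lft_def by linarith
  have "p = p div (s+t) * (s+t) + p mod (s+t)" by (rule div_mult_mod_eq[symmetric])
  also have "\<dots> = q div (s+t) * (s+t) + q mod (s+t)" unfolding e1 e3 ..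
  also have "\<dots> = q" by (rule div_mult_mod_eq)
  finally show ?thesis .
qed


lemma W_e1:
  assumes "0 < s" "0 < t"
  shows "Wm s t U V p (k div s * (s+t) + k mod s) = (if lft s t p then U (uix s t p) k else 0)"
    "Wm s t U V (k div s * (s+t) + k mod s) p = (if lft s t p then U k (uix s t p) else 0)"
  using enc1[OF assms, of k] unfolding Wm_def by auto

lemma W_e2:
  assumes "0 < s" "0 < t"
  shows "Wm s t U V p (k div t * (s+t) + s + k mod t) = (if lft s t p then 0 else V (vix s t p) k)"
    "Wm s t U V (k div t * (s+t) + s + k mod t) p = (if lft s t p then 0 else V k (vix s t p))"
  using enc2[OF assms, of k] unfolding Wm_def by auto

lemma W_rows:
  assumes st: "0 < s" "0 < t" and U: "unitary_mat (d * s) U" and V: "unitary_mat (d * t) V"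
    and p: "p < d * (s+t)" and q: "q < d * (s+t)"
  shows "(\<Sum>k<d * (s+t). Wm s t U V p k * cnj (Wm s t U V q k)) = (if p = q then 1 else 0)"
proof -
  have "(\<Sum>k<d * (s+t). Wm s t U V p k * cnj (Wm s t U V q k))
     = (\<Sum>k<d * s. (if lft s t p then U (uix s t p) k else 0) * cnj (if lft s t q then U (uix s t q) k else 0))
     + (\<Sum>k<d * t. (if lft s t p then 0 else V (vix s t p) k) * cnj (if lft s t q then 0 else V (vix s t q) k))"
    unfolding sum_split2[OF st] W_e1[OF st] W_e2[OF st] ..
  also have "\<dots> = (if p = q then 1 else 0)"
  proof (cases "lft s t p"; cases "lft s t q")
    assume a: "lft s t p" "lft s t q"
    have b: "uix s t p < d * s" "uix s t q < d * s" using uix_bound[OF st p a(1)] uix_bound[OF st q a(2)] by auto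
    have c: "(uix s t p = uix s t q) = (p = q)" using uix_inj[OF st a] by auto
    show ?thesis using a U b c unfolding unitary_mat_def by simp
  next
    assume a: "\<not> lft s t p" "\<not> lft s t q"
    have b: "vix s t p < d * t" "vix s t q < d * t" using vix_bound[OF st p a(1)] vix_bound[OF st q a(2)] by auto
    have c: "(vix s t p = vix s t q) = (p = q)" using vix_inj[OF st a] by auto
    show ?thesis using a V b c unfolding unitary_mat_def by simp
  next
    assume a: "lft s t p" "\<not> lft s t q"
    then have "p \<noteq> q" by auto
    then show ?thesis using a by simp
  next
    assume a: "\<not> lft s t p" "lft s t q"
    then have "p \<noteq> q" by auto
    then show ?thesis using a by simp
  qed
  finally show ?thesis .
qed

lemma W_cols:
  assumes st: "0 < s" "0 < t" and U: "unitary_mat (d * s) U" and V: "unitary_mat (d * t) V"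
    and p: "p < d * (s+t)" and q: "q < d * (s+t)"
  shows "(\<Sum>k<d * (s+t). cnj (Wm s t U V k p) * Wm s t U V k q) = (if p = q then 1 else 0)"
proof -
  have "(\<Sum>k<d * (s+t). cnj (Wm s t U V k p) * Wm s t U V k q)
     = (\<Sum>k<d * s. cnj (if lft s t p then U k (uix s t p) else 0) * (if lft s t q then U k (uix s t q) else 0))
     + (\<Sum>k<d * t. cnj (if lft s t p then 0 else V k (vix s t p)) * (if lft s t q then 0 else V k (vix s t q)))"
    unfolding sum_split2[OF st] W_e1[OF st] W_e2[OF st] ..
  also have "\<dots> = (if p = q then 1 else 0)"
  proof (cases "lft s t p"; cases "lft s t q")
    assume a: "lft s t p" "lft s t q"
    have b: "uix s t p < d * s" "uix s t q < d * s" using uix_bound[OF st p a(1)] uix_bound[OF st q a(2)] by auto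
    have c: "(uix s t p = uix s t q) = (p = q)" using uix_inj[OF st a] by auto
    show ?thesis using a U b c unfolding unitary_mat_def by simp
  next
    assume a: "\<not> lft s t p" "\<not> lft s t q"
    have b: "vix s t p < d * t" "vix s t q < d * t" using vix_bound[OF st p a(1)] vix_bound[OF st q a(2)] by auto
    have c: "(vix s t p = vix s t q) = (p = q)" using vix_inj[OF st a] by auto
    show ?thesis using a V b c unfolding unitary_mat_def by simp
  next
    assume a: "lft s t p" "\<not> lft s t q"
    then have "p \<noteq> q" by auto
    then show ?thesis using a by simp
  next
    assume a: "\<not> lft s t p" "lft s t q"
    then have "p \<noteq> q" by auto
    then show ?thesis using a by simp
  qed
  finally show ?thesis .
qed

lemma W_unitary:
  assumes st: "0 < s" "0 < t" and U: "unitary_mat (d * s) U" and V: "unitary_mat (d * t) V"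
  shows "unitary_mat (d * (s+t)) (Wm s t U V)"
  unfolding unitary_mat_def using W_rows[OF st U V] W_cols[OF st U V] by blast


lemma idx1:
  assumes "a < s" "0 < t"
  shows "lft s t (i * (s+t) + a)" "uix s t (i * (s+t) + a) = i * s + a"
proof -
  have m: "a < s + t" using assms by simp
  show "lft s t (i * (s+t) + a)" unfolding lft_def dm_helper(2)[OF m] using assms(1) .
  show "uix s t (i * (s+t) + a) = i * s + a" unfolding uix_def dm_helper[OF m] ..
qed

lemma idx2:
  assumes "a < t"
  shows "\<not> lft s t (i * (s+t) + (s + a))" "vix s t (i * (s+t) + (s + a)) = i * t + a"
proof -
  have m: "s + a < s + t" using assms by simp
  show "\<not> lft s t (i * (s+t) + (s + a))" unfolding lft_def dm_helper(2)[OF m] by simp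
  show "vix s t (i * (s+t) + (s + a)) = i * t + a" unfolding vix_def dm_helper[OF m] by simp
qed

lemma W_frob:
  assumes st: "0 < s" "0 < t"
  shows "(\<Sum>a<s+t. \<Sum>b<s+t. (cmod (Wm s t U V (i * (s+t) + a) (j * (s+t) + b)))\<^sup>2)
    = (\<Sum>a<s. \<Sum>b<s. (cmod (U (i * s + a) (j * s + b)))\<^sup>2)
    + (\<Sum>a<t. \<Sum>b<t. (cmod (V (i * t + a) (j * t + b)))\<^sup>2)"
proof -
  have "(\<Sum>a<s+t. \<Sum>b<s+t. (cmod (Wm s t U V (i * (s+t) + a) (j * (s+t) + b)))\<^sup>2)
     = (\<Sum>a<s. (\<Sum>b<s. (cmod (Wm s t U V (i * (s+t) + a) (j * (s+t) + b)))\<^sup>2)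
             + (\<Sum>b<t. (cmod (Wm s t U V (i * (s+t) + a) (j * (s+t) + (s + b))))\<^sup>2))
     + (\<Sum>a<t. (\<Sum>b<s. (cmod (Wm s t U V (i * (s+t) + (s + a)) (j * (s+t) + b)))\<^sup>2)
             + (\<Sum>b<t. (cmod (Wm s t U V (i * (s+t) + (s + a)) (j * (s+t) + (s + b))))\<^sup>2))"
    unfolding sum_add_split ..
  also have "\<dots> = (\<Sum>a<s. (\<Sum>b<s. (cmod (U (i * s + a) (j * s + b)))\<^sup>2) + 0)
     + (\<Sum>a<t. 0 + (\<Sum>b<t. (cmod (V (i * t + a) (j * t + b)))\<^sup>2))"
  proof -
    have e1: "(\<Sum>b<s. (cmod (Wm s t U V (i * (s+t) + a) (j * (s+t) + b)))\<^sup>2) = (\<Sum>b<s. (cmod (U (i * s + a) (j * s + b)))\<^sup>2)"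
      and e2: "(\<Sum>b<t. (cmod (Wm s t U V (i * (s+t) + a) (j * (s+t) + (s + b))))\<^sup>2) = 0"
      if a: "a \<in> {..<s}" for a
    proof -
      show "(\<Sum>b<s. (cmod (Wm s t U V (i * (s+t) + a) (j * (s+t) + b)))\<^sup>2) = (\<Sum>b<s. (cmod (U (i * s + a) (j * s + b)))\<^sup>2)"
        using idx1[of a s t i] idx1[of _ s t j] a st unfolding Wm_def by (intro sum.cong refl) auto
      show "(\<Sum>b<t. (cmod (Wm s t U V (i * (s+t) + a) (j * (s+t) + (s + b))))\<^sup>2) = 0"
        using idx1[of a s t i] idx2[of _ t s j] a st unfolding Wm_def by (intro sum.neutral) auto
    qed
    have e3: "(\<Sum>b<s. (cmod (Wm s t U V (i * (s+t) + (s + a)) (j * (s+t) + b)))\<^sup>2) = 0"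
      and e4: "(\<Sum>b<t. (cmod (Wm s t U V (i * (s+t) + (s + a)) (j * (s+t) + (s + b))))\<^sup>2) = (\<Sum>b<t. (cmod (V (i * t + a) (j * t + b)))\<^sup>2)"
      if a: "a \<in> {..<t}" for a
    proof -
      show "(\<Sum>b<s. (cmod (Wm s t U V (i * (s+t) + (s + a)) (j * (s+t) + b)))\<^sup>2) = 0"
        using idx2[of a t s i] idx1[of _ s t j] a st unfolding Wm_def by (intro sum.neutral) auto
      show "(\<Sum>b<t. (cmod (Wm s t U V (i * (s+t) + (s + a)) (j * (s+t) + (s + b))))\<^sup>2) = (\<Sum>b<t. (cmod (V (i * t + a) (j * t + b)))\<^sup>2)"
        using idx2[of a t s i] idx2[of _ t s j] a st unfolding Wm_def by (intro sum.cong refl) auto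
    qed
    have h1: "(\<Sum>a<s. (\<Sum>b<s. (cmod (Wm s t U V (i * (s+t) + a) (j * (s+t) + b)))\<^sup>2)
             + (\<Sum>b<t. (cmod (Wm s t U V (i * (s+t) + a) (j * (s+t) + (s + b))))\<^sup>2))
       = (\<Sum>a<s. (\<Sum>b<s. (cmod (U (i * s + a) (j * s + b)))\<^sup>2) + 0)"
      by (rule sum.cong[OF refl]) (simp only: e1 e2)
    have h2: "(\<Sum>a<t. (\<Sum>b<s. (cmod (Wm s t U V (i * (s+t) + (s + a)) (j * (s+t) + b)))\<^sup>2)
             + (\<Sum>b<t. (cmod (Wm s t U V (i * (s+t) + (s + a)) (j * (s+t) + (s + b))))\<^sup>2))
       = (\<Sum>a<t. 0 + (\<Sum>b<t. (cmod (V (i * t + a) (j * t + b)))\<^sup>2))"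
      by (rule sum.cong[OF refl]) (simp only: e3 e4)
    show ?thesis unfolding h1 h2 ..
  qed
  finally show ?thesis by simp
qed

theorem proposition2p6:
  fixes d s t :: nat and B C :: "nat \<Rightarrow> nat \<Rightarrow> real"
  assumes "d \<ge> 2" and "s \<ge> 1" and "t \<ge> 1"
    and "B \<in> Uset d s" and "C \<in> Uset d t"
  shows "(\<lambda>i j. (real s / real (s+t)) * B i j + (real t / real (s+t)) * C i j) \<in> Uset d (s+t)"
proof -
  have st: "0 < s" "0 < t" using assms(2,3) by auto
  obtain U where U: "unitary_mat (d * s) U" and B: "B = phi d s U" using assms(4) unfolding Uset_def by auto
  obtain V where V: "unitary_mat (d * t) V" and C: "C = phi d t V" using assms(5) unfolding Uset_def by auto
  have "(\<lambda>i j. (real s / real (s+t)) * B i j + (real t / real (s+t)) * C i j) = phi d (s+t) (Wm s t U V)"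
  proof (intro ext)
    fix i j
    show "real s / real (s+t) * B i j + real t / real (s+t) * C i j = phi d (s+t) (Wm s t U V) i j"
    proof (cases "i < d \<and> j < d")
      case True
      then show ?thesis unfolding B C phi_def W_frob[OF st] using st
        by (simp add: add_divide_distrib)
    next
      case False
      show ?thesis unfolding B C phi_def if_not_P[OF False] by simp
    qed
  qed
  moreover have "unitary_mat (d * (s+t)) (Wm s t U V)" by (rule W_unitary[OF st U V])
  ultimately show ?thesis unfolding Uset_def by auto
qed

end
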